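(* Let $F$ be an infinite field, $n\ge3$, and let $z_1,\dots,z_k$ be distinct variables of degrees $g_1,\dots,g_k\in\{1,\dots,n-1\}$ with $g_1+\dots+g_k\le n-1$, and $y_1,y_2,\dots$ distinct variables of degree $0$. Then the commutators $$[z_1,y_1,\dots,y_{t_1},z_2,y_{t_1+1},\dots,y_{t_1+t_2},z_3,\dots,z_k,y_{t_1+\dots+t_{k-1}+1},\dots,y_{t_1+\dots+t_k}]$$ ($t_1,\dots,t_k\ge0$) are linearly independent modulo the $T_{\mathbb{Z}_n}$-ideal $I$ of graded identities of $UT_n(F)^{(-)}$.
   Context: $UT_n(F)^{(-)}$: $n\times n$ upper triangular matrices with bracket $[a,b]=ab-ba$ and canonical $\mathbb{Z}_n$-grading (degree-$k$ component spanned by $e_{ij}$, $j-i=k$); elements of $\mathbb{Z}_n\setminus\{0\}$ are identified with $1,\dots,n-1$. $I$ is the set of polynomials in the free $\mathbb{Z}_n$-graded Lie algebra vanishing on $UT_n(F)^{(-)}$ under degree-respecting substitutions. Commutators are left normed. *)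

theory Defs
  imports "Jordan_Normal_Form.Matrix"
begin

definition lie_br :: "'a::field mat \<Rightarrow> 'a mat \<Rightarrow> 'a mat" where
  "lie_br A B = A * B - B * A"

fun lnc :: "'a::field mat list \<Rightarrow> 'a mat" where
  "lnc [] = undefined"
| "lnc (a # as) = foldl lie_br a as"

(* homogeneous component of degree d (0 \<le> d \<le> n-1) of the canonical Z_n-grading
   of UT_n(F): span of e_ij with j - i = d *)
definition ut_comp :: "nat \<Rightarrow> nat \<Rightarrow> 'a::field mat set" where
  "ut_comp n d = {A \<in> carrier_mat n n. \<forall>i<n. \<forall>j<n. A $$ (i,j) \<noteq> 0 \<longrightarrow> j = i + d}"

(* the sequence z_1, y_1..y_{t_1}, z_2, y_{t_1+1}, ..., z_k, ..., y_{t_1+...+t_k}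
   after substituting z_{i+1} := Z i and y_{j+1} := Y j (0-based indices) *)
definition word :: "(nat \<Rightarrow> 'a mat) \<Rightarrow> (nat \<Rightarrow> 'a mat) \<Rightarrow> nat list \<Rightarrow> 'a mat list" where
  "word Z Y t = concat (map (\<lambda>i. Z i # map Y [sum_list (take i t) ..< sum_list (take (Suc i) t)])
                            [0..<length t])"

end

theory Submission
  imports Defs
begin


definition M :: "nat \<Rightarrow> nat \<Rightarrow> nat \<Rightarrow> 'a::field \<Rightarrow> 'a mat" where
  "M n a b \<alpha> = mat n n (\<lambda>(i,j). if i = a \<and> j = b then \<alpha> else 0)"

definition dg :: "nat \<Rightarrow> (nat \<Rightarrow> 'a::field) \<Rightarrow> 'a mat" where
  "dg n f = mat n n (\<lambda>(i,j). if i = j then f i else 0)"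

lemma M_carrier[simp]: "M n a b \<alpha> \<in> carrier_mat n n" by (simp add: M_def)
lemma dg_carrier[simp]: "dg n f \<in> carrier_mat n n" by (simp add: dg_def)
lemma M_dim[simp]: "dim_row (M n a b \<alpha>) = n" "dim_col (M n a b \<alpha>) = n" by (simp_all add: M_def)
lemma dg_dim[simp]: "dim_row (dg n f) = n" "dim_col (dg n f) = n" by (simp_all add: dg_def)

lemma M_left:
  assumes B: "B \<in> carrier_mat n n" and "i < n" "j < n" "b < n"
  shows "(M n a b \<alpha> * B) $$ (i,j) = (if i = a then \<alpha> * B $$ (b,j) else 0)"
proof -
  have "(M n a b \<alpha> * B) $$ (i,j) = (\<Sum>l\<in>{0..<n}. (if i = a \<and> l = b then \<alpha> else 0) * B $$ (l,j))"
    using assms by (simp add: index_mult_mat scalar_prod_def M_def)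
  also have "\<dots> = (\<Sum>l\<in>{0..<n}. if l = b then (if i = a then \<alpha> * B $$ (l,j) else 0) else 0)"
    by (rule sum.cong) auto
  also have "\<dots> = (if i = a then \<alpha> * B $$ (b,j) else 0)"
    using assms by (simp add: sum.delta')
  finally show ?thesis .
qed

lemma M_right:
  assumes B: "B \<in> carrier_mat n n" and "i < n" "j < n" "a < n"
  shows "(B * M n a b \<alpha>) $$ (i,j) = (if j = b then B $$ (i,a) * \<alpha> else 0)"
proof -
  have "(B * M n a b \<alpha>) $$ (i,j) = (\<Sum>l\<in>{0..<n}. B $$ (i,l) * (if l = a \<and> j = b then \<alpha> else 0))"
    using assms by (simp add: index_mult_mat scalar_prod_def M_def)
  also have "\<dots> = (\<Sum>l\<in>{0..<n}. if l = a then (if j = b then B $$ (i,l) * \<alpha> else 0) else 0)"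
    by (rule sum.cong) auto
  also have "\<dots> = (if j = b then B $$ (i,a) * \<alpha> else 0)"
    using assms by (simp add: sum.delta')
  finally show ?thesis .
qed

lemma lie_MM:
  assumes "b < n" "c < n" "c \<noteq> 0" "0 < n"
  shows "lie_br (M n 0 b \<alpha>) (M n b c 1) = M n 0 c \<alpha>"
proof (rule eq_matI)
  fix i j assume ij: "i < dim_row (M n 0 c \<alpha>)" "j < dim_col (M n 0 c \<alpha>)"
  hence ij': "i < n" "j < n" by (auto simp: M_def)
  have "lie_br (M n 0 b \<alpha>) (M n b c 1) $$ (i,j) = (M n 0 b \<alpha> * M n b c 1) $$ (i,j) - (M n b c 1 * M n 0 b \<alpha>) $$ (i,j)"
    unfolding lie_br_def using ij' by (intro index_minus_mat(1)) simp_all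
  also have "\<dots> = M n 0 c \<alpha> $$ (i,j)"
    using ij' assms by (simp only: M_left[OF M_carrier] M_right[OF M_carrier]) (auto simp: M_def)
  finally show "lie_br (M n 0 b \<alpha>) (M n b c 1) $$ (i,j) = M n 0 c \<alpha> $$ (i,j)" .
qed (auto simp: lie_br_def M_def)

lemma lie_Mdg:
  assumes "b < n" "0 < n"
  shows "lie_br (M n 0 b \<alpha>) (dg n f) = M n 0 b (\<alpha> * (f b - f 0))"
proof (rule eq_matI)
  fix i j assume ij: "i < dim_row (M n 0 b (\<alpha> * (f b - f 0)))" "j < dim_col (M n 0 b (\<alpha> * (f b - f 0)))"
  hence ij': "i < n" "j < n" by (auto simp: M_def)
  have "lie_br (M n 0 b \<alpha>) (dg n f) $$ (i,j) = (M n 0 b \<alpha> * dg n f) $$ (i,j) - (dg n f * M n 0 b \<alpha>) $$ (i,j)"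
    unfolding lie_br_def using ij' by (intro index_minus_mat(1)) simp_all
  also have "\<dots> = M n 0 b (\<alpha> * (f b - f 0)) $$ (i,j)"
    using ij' assms by (simp only: M_left[OF dg_carrier] M_right[OF dg_carrier]) (auto simp: M_def dg_def algebra_simps)
  finally show "lie_br (M n 0 b \<alpha>) (dg n f) $$ (i,j) = M n 0 b (\<alpha> * (f b - f 0)) $$ (i,j)" .
qed (auto simp: lie_br_def M_def)



definition ps :: "nat list \<Rightarrow> nat \<Rightarrow> nat" where
  "ps xs r = sum_list (take r xs)"

lemma ps_0[simp]: "ps xs 0 = 0" by (simp add: ps_def)

lemma ps_Suc: "r < length xs \<Longrightarrow> ps xs (Suc r) = ps xs r + xs ! r"
  by (simp add: ps_def take_Suc_conv_app_nth)

lemma ps_le_Suc: "ps xs r \<le> ps xs (Suc r)"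
proof (cases "r < length xs")
  case True then show ?thesis by (simp add: ps_Suc)
next
  case False then show ?thesis by (simp add: ps_def)
qed

lemma ps_mono: "r \<le> r' \<Longrightarrow> ps xs r \<le> ps xs r'"
  by (induction r' rule: dec_induct) (auto intro: le_trans ps_le_Suc)

lemma ps_le_sum: "ps xs r \<le> sum_list xs"
proof -
  have "sum_list xs = sum_list (take r xs) + sum_list (drop r xs)"
    by (metis append_take_drop_id sum_list_append)
  thus ?thesis by (simp add: ps_def)
qed

lemma ps_full: "length xs = k \<Longrightarrow> ps xs k = sum_list xs"
  by (simp add: ps_def)

lemma ps_strict:
  assumes "\<forall>i<length g. 1 \<le> g ! i" "i < r" "r < length g"
  shows "ps g (Suc i) < ps g (Suc r)"
  using assms(2,3)
proof (induction r)
  case 0 then show ?case by simp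
next
  case (Suc r)
  have "ps g (Suc (Suc r)) = ps g (Suc r) + g ! Suc r" using Suc.prems by (simp add: ps_Suc)
  moreover have "1 \<le> g ! Suc r" using assms(1) Suc.prems by auto
  moreover have "ps g (Suc i) \<le> ps g (Suc r)"
    using Suc by (cases "i < r") (auto simp: less_Suc_eq)
  ultimately show ?case by linarith
qed

lemma ps_inj:
  assumes "\<forall>i<length g. 1 \<le> g ! i" "i < length g" "r < length g" "ps g (Suc i) = ps g (Suc r)"
  shows "i = r"
  using ps_strict[OF assms(1), of i r] ps_strict[OF assms(1), of r i] assms
  by (metis less_irrefl nat_neq_iff)

lemma ps_pos:
  assumes "\<forall>i<length g. 1 \<le> g ! i" "i < length g"
  shows "0 < ps g (Suc i)"
  using assms(1)[rule_format, OF assms(2)] assms(2) by (simp add: ps_Suc)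

lemma word_ps: "word Z Y t = concat (map (\<lambda>i. Z i # map Y [ps t i..<ps t (Suc i)]) [0..<length t])"
  by (simp add: word_def ps_def)

lemma fold_Y:
  assumes "b < n" "0 < n"
  shows "foldl lie_br (M n 0 b \<alpha>) (map (\<lambda>j. dg n (D j)) L)
       = M n 0 b (\<alpha> * prod_list (map (\<lambda>j. D j b - D j 0) L))"
  using assms
proof (induction L arbitrary: \<alpha>)
  case Nil then show ?case by simp
next
  case (Cons x L)
  show ?case using Cons by (simp add: lie_Mdg mult.assoc)
qed

definition Zf :: "nat \<Rightarrow> nat list \<Rightarrow> nat \<Rightarrow> 'a::field mat" where
  "Zf n g i = M n (ps g i) (ps g (Suc i)) 1"

lemma fold_blocks:
  assumes "length t = length g" "\<forall>i<length g. 1 \<le> g ! i" "sum_list g < n"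
  shows "r \<le> length g \<Longrightarrow>
    foldl lie_br (M n 0 0 1) (concat (map (\<lambda>i. Zf n g i # map (\<lambda>j. dg n (D j)) [ps t i..<ps t (Suc i)]) [0..<r]))
    = M n 0 (ps g r) (prod_list (map (\<lambda>i. prod_list (map (\<lambda>j. D j (ps g (Suc i)) - D j 0) [ps t i..<ps t (Suc i)])) [0..<r]))"
proof (induction r)
  case 0 then show ?case by simp
next
  case (Suc r)
  have r: "r < length g" using Suc.prems by simp
  have n0: "0 < n" using assms(3) by simp
  have b: "ps g r < n" using ps_le_sum[of g r] assms(3) by simp
  have c: "ps g (Suc r) < n" using ps_le_sum[of g "Suc r"] assms(3) by simp
  have c0: "ps g (Suc r) \<noteq> 0" using ps_pos[OF assms(2) r] by simp
  show ?case
    using Suc.IH r b c c0 n0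
    by (simp add: Zf_def lie_MM fold_Y)
qed

lemma lnc_word:
  assumes "length t = length g" "\<forall>i<length g. 1 \<le> g ! i" "sum_list g < n" "length g \<ge> 1"
  shows "lnc (word (Zf n g) (\<lambda>j. dg n (D j)) t)
    = M n 0 (ps g (length g)) (prod_list (map (\<lambda>i. prod_list (map (\<lambda>j. D j (ps g (Suc i)) - D j 0) [ps t i..<ps t (Suc i)])) [0..<length g]))" (is "_ = ?rhs")
proof -
  let ?Y = "\<lambda>j. dg n (D j)"
  let ?f = "\<lambda>i. Zf n g i # map ?Y [ps t i..<ps t (Suc i)]"
  have w: "word (Zf n g) ?Y t = concat (map ?f [0..<length g])"
    using assms(1) by (simp add: word_ps)
  have u: "[0..<length g] = 0 # [Suc 0..<length g]" using assms(4) upt_conv_Cons[of 0 "length g"] by (cases g) auto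
  obtain rest where rest: "word (Zf n g) ?Y t = Zf n g 0 # rest"
    using w u by auto
  have g0: "0 < length g" using assms(4) by linarith
  have c: "ps g 1 < n" using ps_le_sum[of g 1] assms(3) by simp
  have c0: "ps g 1 \<noteq> 0" using ps_pos[OF assms(2) g0] by simp
  have "lie_br (M n 0 0 1) (Zf n g 0) = (Zf n g 0 :: 'a mat)"
    unfolding Zf_def using lie_MM[of 0 n "ps g 1" "1::'a"] c c0 by simp
  hence "lnc (word (Zf n g) ?Y t) = foldl lie_br (M n 0 0 1) (word (Zf n g) ?Y t)"
    using rest by simp
  also have "\<dots> = ?rhs"
    unfolding w by (rule fold_blocks[OF assms(1-3)]) simp
  finally show ?thesis .
qed



definition cont :: "nat \<Rightarrow> nat list \<Rightarrow> nat list \<Rightarrow> bool" where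
  "cont k t t0 = (\<forall>i<k. \<forall>j. ps t i \<le> j \<and> j < ps t (Suc i) \<longrightarrow> ps t0 i \<le> j \<and> j < ps t0 (Suc i))"

lemma ps_up:
  assumes "cont k t t0"
  shows "r \<le> k \<Longrightarrow> ps t r \<le> ps t0 r"
proof (induction r)
  case 0 then show ?case by simp
next
  case (Suc r)
  show ?case
  proof (cases "ps t r < ps t (Suc r)")
    case True
    have r: "r < k" using Suc.prems by simp
    have "ps t r \<le> ps t (Suc r) - 1 \<and> ps t (Suc r) - 1 < ps t (Suc r)" using True by linarith
    hence "ps t0 r \<le> ps t (Suc r) - 1 \<and> ps t (Suc r) - 1 < ps t0 (Suc r)"
      using assms r unfolding cont_def by blast
    then show ?thesis using True by linarith
  next
    case False
    then have "ps t (Suc r) = ps t r" using ps_le_Suc[of t r] by linarith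
    then show ?thesis using Suc ps_le_Suc[of t0 r] by simp
  qed
qed

lemma ps_eq:
  assumes "cont k t t0" "ps t k = ps t0 k"
  shows "d \<le> k \<Longrightarrow> ps t (k - d) = ps t0 (k - d)"
proof (induction d)
  case 0 then show ?case using assms by simp
next
  case (Suc d)
  define r where "r = k - Suc d"
  have r: "r < k" "Suc r = k - d" using Suc.prems unfolding r_def by auto
  have IH: "ps t (Suc r) = ps t0 (Suc r)" using Suc r by simp
  have up: "ps t r \<le> ps t0 r" using ps_up[OF assms(1)] r by simp
  have "ps t r = ps t0 r"
  proof (cases "ps t r < ps t (Suc r)")
    case True
    then have "ps t0 r \<le> ps t r" using assms(1) r unfolding cont_def by blast
    then show ?thesis using up by simp
  next
    case False
    then have "ps t (Suc r) = ps t r" using ps_le_Suc[of t r] by linarith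
    then show ?thesis using IH up ps_le_Suc[of t0 r] by simp
  qed
  then show ?case unfolding r_def by simp
qed

lemma t_eq:
  assumes "cont k t t0" "ps t k = ps t0 k" "length t = k" "length t0 = k"
  shows "t = t0"
proof (rule nth_equalityI)
  show "length t = length t0" using assms by simp
  fix i assume i: "i < length t"
  have e: "\<And>r. r \<le> k \<Longrightarrow> ps t r = ps t0 r"
  proof -
    fix r assume "r \<le> k"
    then show "ps t r = ps t0 r" using ps_eq[OF assms(1,2), of "k - r"] by simp
  qed
  have "ps t (Suc i) = ps t0 (Suc i)" "ps t i = ps t0 i" using e i assms(3) by auto
  then show "t ! i = t0 ! i" using ps_Suc[of i t] ps_Suc[of i t0] i assms(3,4) by simp
qed



definition Df :: "nat list \<Rightarrow> nat list \<Rightarrow> nat \<Rightarrow> nat \<Rightarrow> 'a::field" where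
  "Df g t0 j a = (if \<exists>r<length g. ps t0 r \<le> j \<and> j < ps t0 (Suc r) \<and> a = ps g (Suc r) then 1 else 0)"

definition Pf :: "nat list \<Rightarrow> nat list \<Rightarrow> (nat \<Rightarrow> nat \<Rightarrow> 'a::field) \<Rightarrow> 'a" where
  "Pf g t D = prod_list (map (\<lambda>i. prod_list (map (\<lambda>j. D j (ps g (Suc i)) - D j 0) [ps t i..<ps t (Suc i)])) [0..<length g])"

lemma Df0:
  assumes "\<forall>i<length g. 1 \<le> g ! i"
  shows "Df g t0 j 0 = 0"
proof -
  have "\<not> (\<exists>r<length g. ps t0 r \<le> j \<and> j < ps t0 (Suc r) \<and> 0 = ps g (Suc r))"
  proof
    assume "\<exists>r<length g. ps t0 r \<le> j \<and> j < ps t0 (Suc r) \<and> 0 = ps g (Suc r)"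
    then obtain r where "r < length g" "0 = ps g (Suc r)" by blast
    with ps_pos[OF assms this(1)] show False by simp
  qed
  then show ?thesis unfolding Df_def by (simp only: if_False)
qed

lemma prod_list_ones: "(\<forall>x\<in>set xs. f x = (1::'a::field)) \<Longrightarrow> prod_list (map f xs) = 1"
  by (induction xs) auto

lemma Df1:
  assumes "i < length g" "ps t0 i \<le> j" "j < ps t0 (Suc i)"
  shows "Df g t0 j (ps g (Suc i)) = 1"
proof -
  have "\<exists>r<length g. ps t0 r \<le> j \<and> j < ps t0 (Suc r) \<and> ps g (Suc i) = ps g (Suc r)"
    using assms by blast
  then show ?thesis unfolding Df_def by (simp only: if_True)
qed

lemma P_self:
  assumes "\<forall>i<length g. 1 \<le> g ! i"
  shows "Pf g t0 (Df g t0 :: nat \<Rightarrow> nat \<Rightarrow> 'a::field) = 1"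
  unfolding Pf_def
proof (rule prod_list_ones, intro ballI)
  fix i assume i: "i \<in> set [0..<length g]"
  show "(\<Prod>j\<leftarrow>[ps t0 i..<ps t0 (Suc i)]. Df g t0 j (ps g (Suc i)) - Df g t0 j 0) = (1::'a)"
  proof (rule prod_list_ones, intro ballI)
    fix j assume j: "j \<in> set [ps t0 i..<ps t0 (Suc i)]"
    have "Df g t0 j (ps g (Suc i)) = (1::'a)" using i j by (intro Df1) auto
    moreover have "Df g t0 j 0 = (0::'a)" using Df0[OF assms] .
    ultimately show "Df g t0 j (ps g (Suc i)) - Df g t0 j 0 = (1::'a)" by simp
  qed
qed

lemma P_cont:
  assumes "\<forall>i<length g. 1 \<le> g ! i"
    and "Pf g t (Df g t0 :: nat \<Rightarrow> nat \<Rightarrow> 'a::field) \<noteq> 0"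
  shows "cont (length g) t t0"
  unfolding cont_def
proof (intro allI impI)
  fix i j assume i: "i < length g" and j: "ps t i \<le> j \<and> j < ps t (Suc i)"
  let ?F = "\<lambda>i. prod_list (map (\<lambda>j. Df g t0 j (ps g (Suc i)) - (Df g t0 j 0 :: 'a)) [ps t i..<ps t (Suc i)])"
  have "prod_list (map ?F [0..<length g]) \<noteq> 0" using assms(2) unfolding Pf_def .
  hence "0 \<notin> set (map ?F [0..<length g])" by (simp only: prod_list_zero_iff not_False_eq_True)
  moreover have "?F i \<in> set (map ?F [0..<length g])" using i by simp
  ultimately have "?F i \<noteq> 0" by metis
  hence "0 \<notin> set (map (\<lambda>j. Df g t0 j (ps g (Suc i)) - (Df g t0 j 0 :: 'a)) [ps t i..<ps t (Suc i)])"
    by (simp only: prod_list_zero_iff not_False_eq_True)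
  moreover have "(Df g t0 j (ps g (Suc i)) - (Df g t0 j 0 :: 'a)) \<in> set (map (\<lambda>j. Df g t0 j (ps g (Suc i)) - (Df g t0 j 0 :: 'a)) [ps t i..<ps t (Suc i)])"
    using j by simp
  ultimately have "(Df g t0 j (ps g (Suc i)) - Df g t0 j 0 :: 'a) \<noteq> 0" by metis
  moreover have "Df g t0 j 0 = (0::'a)" by (rule Df0[OF assms(1)])
  ultimately have "(Df g t0 j (ps g (Suc i)) :: 'a) \<noteq> 0" by simp
  then obtain r where r: "r < length g" "ps t0 r \<le> j" "j < ps t0 (Suc r)" "ps g (Suc i) = ps g (Suc r)"
    unfolding Df_def by (metis (no_types, lifting))
  have "i = r" using ps_inj[OF assms(1) i r(1) r(4)] .
  then show "ps t0 i \<le> j \<and> j < ps t0 (Suc i)" using r by simp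
qed

theorem mainTheorem15:
  fixes n k :: nat and g :: "nat list"
    and S :: "nat list set" and c :: "nat list \<Rightarrow> 'a::field"
  assumes "infinite (UNIV :: 'a set)"
    and "n \<ge> 3"
    and "k \<ge> 1" and "length g = k"
    and "\<forall>i<k. 1 \<le> g ! i \<and> g ! i \<le> n - 1"
    and "sum_list g \<le> n - 1"
    and "finite S" and "\<forall>t\<in>S. length t = k"
    and "\<forall>(Z :: nat \<Rightarrow> 'a mat) (Y :: nat \<Rightarrow> 'a mat).
           (\<forall>i<k. Z i \<in> ut_comp n (g ! i)) \<longrightarrow> (\<forall>j. Y j \<in> ut_comp n 0) \<longrightarrow>
           (\<forall>a<n. \<forall>b<n. (\<Sum>t\<in>S. c t * lnc (word Z Y t) $$ (a, b)) = 0)"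
  shows "\<forall>t\<in>S. c t = 0"
proof -
  have g1: "\<forall>i<length g. 1 \<le> g ! i" using assms(4,5) by auto
  have gn: "sum_list g < n" using assms(2,6) by linarith
  have n0: "0 < n" using assms(2) by linarith
  have pk: "ps g k < n" using ps_le_sum[of g k] gn by simp
  have key: "\<forall>t0\<in>S. sum_list t0 = m \<longrightarrow> c t0 = 0" for m
  proof (induction m rule: less_induct)
    case (less m)
    show ?case
    proof (intro ballI impI)
      fix t0 assume t0S: "t0 \<in> S" and sm: "sum_list t0 = m"
      define D where "D = (Df g t0 :: nat \<Rightarrow> nat \<Rightarrow> 'a)"
      define Z where "Z = (Zf n g :: nat \<Rightarrow> 'a mat)"
      define Y where "Y = (\<lambda>j. dg n (D j))"
      have Zin: "\<forall>i<k. Z i \<in> ut_comp n (g ! i)"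
      proof (intro allI impI)
        fix i assume i: "i < k"
        have "ps g (Suc i) = ps g i + g ! i" using i assms(4) by (simp add: ps_Suc)
        then show "Z i \<in> ut_comp n (g ! i)"
          unfolding Z_def Zf_def ut_comp_def by (auto simp: M_def)
      qed
      have Yin: "\<forall>j. Y j \<in> ut_comp n 0"
        by (auto simp: Y_def ut_comp_def dg_def)
      have "(\<Sum>t\<in>S. c t * lnc (word Z Y t) $$ (0, ps g k)) = 0"
        using assms(9)[rule_format, OF Zin[rule_format] Yin[rule_format] n0 pk] .
      moreover have "\<And>t. t \<in> S \<Longrightarrow> lnc (word Z Y t) $$ (0, ps g k) = Pf g t D"
      proof -
        fix t assume "t \<in> S"
        hence lt: "length t = length g" using assms(4,8) by simp
        show "lnc (word Z Y t) $$ (0, ps g k) = Pf g t D"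
          unfolding Z_def Y_def
          using lnc_word[OF lt g1 gn, of D] assms(3,4) n0 pk
          by (simp add: M_def Pf_def)
      qed
      ultimately have s0: "(\<Sum>t\<in>S. c t * Pf g t D) = 0" by simp
      have terms: "\<And>t. t \<in> S \<Longrightarrow> c t * Pf g t D = (if t = t0 then c t0 else 0)"
      proof -
        fix t assume tS: "t \<in> S"
        show "c t * Pf g t D = (if t = t0 then c t0 else 0)"
        proof (cases "t = t0")
          case True
          have "Pf g t0 D = 1" unfolding D_def by (rule P_self[OF g1])
          then show ?thesis using True by simp
        next
          case False
          show ?thesis
          proof (cases "Pf g t D = 0")
            case True then show ?thesis using False by simp
          next
            case nz: False
            have ct: "cont k t t0" using P_cont[OF g1 nz[unfolded D_def]] assms(4) by simp
            have lt: "length t = k" "length t0 = k" using assms(8) tS t0S by auto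
            have le: "sum_list t \<le> sum_list t0"
              using ps_up[OF ct, of k] ps_full[OF lt(1)] ps_full[OF lt(2)] by simp
            have "sum_list t \<noteq> sum_list t0"
              using t_eq[OF ct _ lt] ps_full[OF lt(1)] ps_full[OF lt(2)] False by auto
            hence "sum_list t < m" using le sm by simp
            hence "c t = 0" using less tS by blast
            then show ?thesis using False by simp
          qed
        qed
      qed
      have "(\<Sum>t\<in>S. c t * Pf g t D) = (\<Sum>t\<in>S. if t = t0 then c t0 else 0)"
        using terms by (rule sum.cong[OF refl])
      also have "\<dots> = c t0" using assms(7) t0S by simp
      finally show "c t0 = 0" using s0 by simp
    qed
  qed
  show ?thesis using key by blast
qed

end
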